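(* Let $R=R_1\times R_2\times R_3$ be a direct product of three finite commutative local rings with identity, and let $I=I_1\times I_2\times I_3$ where $I_i$ is a proper ideal of $R_i$ for $i=1,2,3$. If some $R_i$ ($1\leq i\leq 3$) has at least three elements, then $\Gamma''_I(R)$ is not planar.
   Context: The product has componentwise operations. For a commutative ring $R$ and an ideal $I$ of $R$, $\Gamma''_I(R)$ is the simple undirected graph whose vertex set is $\{x\in R\setminus I : xR+I\neq R\}$, with distinct vertices $x,y$ adjacent if and only if $x\notin yR+I$ and $y\notin xR+I$. A graph is planar if it can be drawn in the plane with edges meeting only at their endpoints. *)

theory Defs
  imports "HOL-Analysis.Analysis"
begin

instantiation prod :: (times, times) times
begin
definition times_prod_def: "x * y = (fst x * fst y, snd x * snd y)"
instance ..
end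

instantiation prod :: (one, one) one
begin
definition one_prod_def: "1 = (1, 1)"
instance ..
end

instance prod :: (comm_ring_1, comm_ring_1) comm_ring_1
  by standard (auto simp: times_prod_def one_prod_def zero_prod_def plus_prod_def
      algebra_simps prod_eq_iff)

definition is_ideal :: "'a::comm_ring_1 set \<Rightarrow> bool" where
  "is_ideal I \<longleftrightarrow> 0 \<in> I \<and> (\<forall>x\<in>I. \<forall>y\<in>I. x + y \<in> I) \<and> (\<forall>x\<in>I. \<forall>r. r * x \<in> I)"

definition proper_ideal :: "'a::comm_ring_1 set \<Rightarrow> bool" where
  "proper_ideal I \<longleftrightarrow> is_ideal I \<and> I \<noteq> UNIV"

definition maximal_ideal :: "'a::comm_ring_1 set \<Rightarrow> bool" where
  "maximal_ideal M \<longleftrightarrow> proper_ideal M \<and>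
     (\<forall>J. is_ideal J \<and> M \<subseteq> J \<longrightarrow> J = M \<or> J = UNIV)"

definition local_ring :: "'a::comm_ring_1 itself \<Rightarrow> bool" where
  "local_ring _ \<longleftrightarrow> (\<exists>!M::'a set. maximal_ideal M)"

definition span_plus :: "'a::comm_ring_1 \<Rightarrow> 'a set \<Rightarrow> 'a set" where
  "span_plus x I = {x * r + i | r i. i \<in> I}"

definition gamma2_verts :: "'a::comm_ring_1 set \<Rightarrow> 'a set" where
  "gamma2_verts I = {x. x \<notin> I \<and> span_plus x I \<noteq> UNIV}"

definition gamma2_adj :: "'a::comm_ring_1 set \<Rightarrow> 'a \<Rightarrow> 'a \<Rightarrow> bool" where
  "gamma2_adj I x y \<longleftrightarrow> x \<in> gamma2_verts I \<and> y \<in> gamma2_verts I \<and> x \<noteq> y \<and>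
     x \<notin> span_plus y I \<and> y \<notin> span_plus x I"

definition planar :: "'v set \<Rightarrow> ('v \<Rightarrow> 'v \<Rightarrow> bool) \<Rightarrow> bool" where
  "planar V E \<longleftrightarrow> (\<exists>(f :: 'v \<Rightarrow> complex) (p :: 'v \<Rightarrow> 'v \<Rightarrow> real \<Rightarrow> complex).
     inj_on f V \<and>
     (\<forall>u\<in>V. \<forall>v\<in>V. E u v \<longrightarrow>
        arc (p u v) \<and> pathstart (p u v) = f u \<and> pathfinish (p u v) = f v \<and>
        path_image (p u v) \<inter> f ` V = {f u, f v}) \<and>
     (\<forall>u\<in>V. \<forall>v\<in>V. \<forall>u'\<in>V. \<forall>v'\<in>V. E u v \<and> E u' v' \<and> {u, v} \<noteq> {u', v'} \<longrightarrow>
        path_image (p u v) \<inter> path_image (p u' v') \<subseteq> f ` ({u, v} \<inter> {u', v'})))"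

end

theory Submission
  imports Defs
begin


lemma sep2:
  assumes "open A" "open B" "A \<inter> B = {}" "connected D" "D \<subseteq> A \<union> B"
  shows "D \<subseteq> A \<or> D \<subseteq> B"
  using connectedD[OF assms(4,1,2)] assms(3,5) by blast

lemma sep3:
  assumes "open A" "open B" "open C" "A \<inter> B = {}" "A \<inter> C = {}" "B \<inter> C = {}"
    "connected D" "D \<subseteq> A \<union> B \<union> C"
  shows "D \<subseteq> A \<or> D \<subseteq> B \<or> D \<subseteq> C"
proof -
  have "D \<subseteq> A \<or> D \<subseteq> B \<union> C"
    using sep2[of A "B \<union> C" D] assms by (auto simp: Un_assoc)
  moreover have "D \<subseteq> B \<union> C \<Longrightarrow> D \<subseteq> B \<or> D \<subseteq> C"
    using sep2[of B C D] assms by auto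
  ultimately show ?thesis by blast
qed

lemma closure_outside_subset:
  fixes S :: "'a::real_normed_vector set"
  assumes "closed S"
  shows "closure(outside S) \<subseteq> S \<union> outside S"
  using frontier_outside_subset[OF assms] closure_Un_frontier[of "outside S"] by blast

lemma arc_start_closure:
  fixes g :: "real \<Rightarrow> complex"
  assumes "arc g"
  shows "pathstart g \<in> closure (path_image g - {pathstart g, pathfinish g})"
proof -
  let ?t = "\<lambda>n::nat. inverse (real (Suc (Suc n)))"
  have t0: "?t \<longlonglongrightarrow> 0"
    using LIMSEQ_Suc[OF LIMSEQ_inverse_real_of_nat] by simp
  have tin: "?t n \<in> {0<..<1}" for n
    by (auto simp: field_simps)
  have inj: "inj_on g {0..1}" and cont: "continuous_on {0..1} g"
    using assms by (auto simp: arc_def path_def)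
  have "(\<lambda>n. g (?t n)) \<longlonglongrightarrow> g 0"
  proof (rule continuous_on_tendsto_compose[OF cont t0])
    have "\<forall>n. ?t n \<in> {0..1}" using tin by (meson greaterThanLessThan_iff atLeastAtMost_iff less_imp_le)
    then show "\<forall>\<^sub>F n in sequentially. ?t n \<in> {0..1}" by (simp add: always_eventually)
  qed auto
  moreover have "g (?t n) \<in> path_image g - {pathstart g, pathfinish g}" for n
  proof -
    have a: "?t n \<in> {0..1}" using tin[of n] by auto
    have "g (?t n) \<noteq> g 0" "g (?t n) \<noteq> g 1"
      using inj_onD[OF inj _ a] tin[of n] by force+
    then show ?thesis using a by (auto simp: path_image_def pathstart_def pathfinish_def)
  qed
  ultimately show ?thesis unfolding closure_sequential pathstart_def by (intro exI[of _ "\<lambda>n. g (?t n)"]) auto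
qed

lemma arc_finish_closure:
  fixes g :: "real \<Rightarrow> complex"
  assumes "arc g"
  shows "pathfinish g \<in> closure (path_image g - {pathstart g, pathfinish g})"
  using arc_start_closure[OF arc_reversepath[OF assms]] by (auto simp: insert_commute)

lemma arc_mid:
  fixes g :: "real \<Rightarrow> complex"
  assumes "arc g"
  shows "path_image g - {pathstart g, pathfinish g} \<noteq> {}"
  using arc_start_closure[OF assms] by (metis closure_empty empty_iff)

lemma jordan2:
  fixes c1 c2 :: "real \<Rightarrow> complex"
  assumes "arc c1" "arc c2" "pathstart c1 = a" "pathfinish c1 = b"
    "pathstart c2 = a" "pathfinish c2 = b" "path_image c1 \<inter> path_image c2 \<subseteq> {a,b}"
  shows "inside (path_image c1 \<union> path_image c2) \<noteq> {}"
    "connected (inside (path_image c1 \<union> path_image c2))"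
    "open (inside (path_image c1 \<union> path_image c2))"
    "open (outside (path_image c1 \<union> path_image c2))"
    "connected (outside (path_image c1 \<union> path_image c2))"
    "frontier (inside (path_image c1 \<union> path_image c2)) = path_image c1 \<union> path_image c2"
proof -
  let ?l = "c1 +++ reversepath c2"
  have sp: "simple_path ?l"
    using assms by (simp add: simple_path_join_loop_eq arc_reversepath)
  have pi: "path_image ?l = path_image c1 \<union> path_image c2"
    using assms by (simp add: path_image_join)
  have lp: "pathfinish ?l = pathstart ?l" using assms by simp
  note J = Jordan_inside_outside[OF sp lp, unfolded pi]
  show "inside (path_image c1 \<union> path_image c2) \<noteq> {}"
    "connected (inside (path_image c1 \<union> path_image c2))"
    "open (inside (path_image c1 \<union> path_image c2))"
    "open (outside (path_image c1 \<union> path_image c2))"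
    "connected (outside (path_image c1 \<union> path_image c2))"
    "frontier (inside (path_image c1 \<union> path_image c2)) = path_image c1 \<union> path_image c2"
    using J by auto
qed


locale theta =
  fixes c1 c2 c3 :: "real \<Rightarrow> complex" and a b :: complex
  assumes arc1: "arc c1" and arc2: "arc c2" and arc3: "arc c3"
    and s1: "pathstart c1 = a" and f1: "pathfinish c1 = b"
    and s2: "pathstart c2 = a" and f2: "pathfinish c2 = b"
    and s3: "pathstart c3 = a" and f3: "pathfinish c3 = b"
    and ab: "a \<noteq> b"
    and i12: "path_image c1 \<inter> path_image c2 \<subseteq> {a,b}"
    and i13: "path_image c1 \<inter> path_image c3 \<subseteq> {a,b}"
    and i23: "path_image c2 \<inter> path_image c3 \<subseteq> {a,b}"
begin

abbreviation "X1 \<equiv> path_image c1"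
abbreviation "X2 \<equiv> path_image c2"
abbreviation "X3 \<equiv> path_image c3"

lemma ends: "a \<in> X1" "b \<in> X1" "a \<in> X2" "b \<in> X2" "a \<in> X3" "b \<in> X3"
  using pathstart_in_path_image[of c1] pathfinish_in_path_image[of c1]
    pathstart_in_path_image[of c2] pathfinish_in_path_image[of c2]
    pathstart_in_path_image[of c3] pathfinish_in_path_image[of c3] s1 f1 s2 f2 s3 f3 by auto

lemma e12: "X1 \<inter> X2 = {a,b}" and e13: "X1 \<inter> X3 = {a,b}" and e23: "X2 \<inter> X3 = {a,b}"
  using i12 i13 i23 ends by auto

lemma cl: "closed X1" "closed X2" "closed X3" "compact X1" "compact X2" "compact X3"
  using arc1 arc2 arc3 by (auto intro: closed_path_image compact_path_image arc_imp_path)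

lemma J12: "inside (X1 \<union> X2) \<noteq> {}" "connected (inside (X1 \<union> X2))" "open (inside (X1 \<union> X2))"
    "open (outside (X1 \<union> X2))" "connected (outside (X1 \<union> X2))"
    "frontier (inside (X1 \<union> X2)) = X1 \<union> X2"
  using jordan2[OF arc1 arc2 s1 f1 s2 f2 i12] by auto
lemma J13: "inside (X1 \<union> X3) \<noteq> {}" "connected (inside (X1 \<union> X3))" "open (inside (X1 \<union> X3))"
    "open (outside (X1 \<union> X3))" "connected (outside (X1 \<union> X3))"
    "frontier (inside (X1 \<union> X3)) = X1 \<union> X3"
  using jordan2[OF arc1 arc3 s1 f1 s3 f3 i13] by auto
lemma J23: "inside (X2 \<union> X3) \<noteq> {}" "connected (inside (X2 \<union> X3))" "open (inside (X2 \<union> X3))"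
    "open (outside (X2 \<union> X3))" "connected (outside (X2 \<union> X3))"
    "frontier (inside (X2 \<union> X3)) = X2 \<union> X3"
  using jordan2[OF arc2 arc3 s2 f2 s3 f3 i23] by auto

lemma mid1: "X1 - {a,b} \<noteq> {}" using arc_mid[OF arc1] s1 f1 by simp
lemma mid2: "X2 - {a,b} \<noteq> {}" using arc_mid[OF arc2] s2 f2 by simp
lemma mid3: "X3 - {a,b} \<noteq> {}" using arc_mid[OF arc3] s3 f3 by simp

lemma clin: "closure (inside (X1 \<union> X2)) \<subseteq> X1 \<union> X2 \<union> inside (X1 \<union> X2)"
   "closure (inside (X1 \<union> X3)) \<subseteq> X1 \<union> X3 \<union> inside (X1 \<union> X3)"
   "closure (inside (X2 \<union> X3)) \<subseteq> X2 \<union> X3 \<union> inside (X2 \<union> X3)"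
  using closure_inside_subset cl by (metis closed_Un)+

lemma clout: "closure (outside (X1 \<union> X2)) \<subseteq> X1 \<union> X2 \<union> outside (X1 \<union> X2)"
   "closure (outside (X1 \<union> X3)) \<subseteq> X1 \<union> X3 \<union> outside (X1 \<union> X3)"
   "closure (outside (X2 \<union> X3)) \<subseteq> X2 \<union> X3 \<union> outside (X2 \<union> X3)"
  using closure_outside_subset cl by (metis closed_Un)+

lemma some_inside:
  "X3 \<inter> inside (X1 \<union> X2) \<noteq> {} \<or> X1 \<inter> inside (X2 \<union> X3) \<noteq> {} \<or> X2 \<inter> inside (X1 \<union> X3) \<noteq> {}"
proof (rule ccontr)
  assume "\<not> ?thesis"
  then have n3: "X3 \<inter> inside (X1 \<union> X2) = {}" and n1: "X1 \<inter> inside (X2 \<union> X3) = {}"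
    and n2: "X2 \<inter> inside (X1 \<union> X3) = {}" by auto
  let ?U = "inside (X1 \<union> X2)"
  have cU: "closure ?U = X1 \<union> X2 \<union> ?U"
    using J12(6) closure_Un_frontier[of ?U] by blast
  have "?U \<subseteq> - (X1 \<union> X3)" using n3 inside_no_overlap[of "X1 \<union> X2"] by blast
  then have "?U \<subseteq> inside (X1 \<union> X3) \<or> ?U \<subseteq> outside (X1 \<union> X3)"
    using sep2[OF J13(3) J13(4) inside_Int_outside J12(2)] inside_Un_outside by blast
  moreover have "\<not> ?U \<subseteq> inside (X1 \<union> X3)"
  proof
    assume "?U \<subseteq> inside (X1 \<union> X3)"
    then have "closure ?U \<subseteq> X1 \<union> X3 \<union> inside (X1 \<union> X3)"
      using closure_mono clin(2) by blast
    moreover obtain z where "z \<in> X2 - {a,b}" using mid2 by blast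
    ultimately show False using cU n2 e12 e23 by blast
  qed
  ultimately have U13: "?U \<subseteq> outside (X1 \<union> X3)" by blast
  have "?U \<subseteq> - (X2 \<union> X3)" using n3 inside_no_overlap[of "X1 \<union> X2"] by blast
  then have "?U \<subseteq> inside (X2 \<union> X3) \<or> ?U \<subseteq> outside (X2 \<union> X3)"
    using sep2[OF J23(3) J23(4) inside_Int_outside J12(2)] inside_Un_outside by blast
  moreover have "\<not> ?U \<subseteq> inside (X2 \<union> X3)"
  proof
    assume "?U \<subseteq> inside (X2 \<union> X3)"
    then have "closure ?U \<subseteq> X2 \<union> X3 \<union> inside (X2 \<union> X3)"
      using closure_mono clin(3) by blast
    moreover obtain z where "z \<in> X1 - {a,b}" using mid1 by blast
    ultimately show False using cU n1 e12 e13 by blast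
  qed
  ultimately have U23: "?U \<subseteq> outside (X2 \<union> X3)" by blast
  obtain u where u: "u \<in> ?U" using J12(1) by blast
  have bd: "bounded (X1 \<union> X2 \<union> X3)" using cl by (auto intro: compact_imp_bounded)
  obtain w where w: "w \<in> outside (X1 \<union> X2 \<union> X3)"
    using unbounded_outside[OF bd] by (metis bounded_empty equals0I)
  have w13: "w \<in> outside (X1 \<union> X3)" and w23: "w \<in> outside (X2 \<union> X3)"
    and w12: "w \<in> outside (X1 \<union> X2)"
    using w outside_mono[of "X1 \<union> X3" "X1 \<union> X2 \<union> X3"]
      outside_mono[of "X2 \<union> X3" "X1 \<union> X2 \<union> X3"] outside_mono[of "X1 \<union> X2" "X1 \<union> X2 \<union> X3"]
    by blast+
  have cc1: "connected_component (- (X1 \<union> X3)) u w"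
    unfolding connected_component_def
    using J13(5) U13 u w13 outside_no_overlap[of "X1 \<union> X3"]
    by (intro exI[of _ "outside (X1 \<union> X3)"]) blast
  have cc2: "connected_component (- (X2 \<union> X3)) u w"
    unfolding connected_component_def
    using J23(5) U23 u w23 outside_no_overlap[of "X2 \<union> X3"]
    by (intro exI[of _ "outside (X2 \<union> X3)"]) blast
  have "(X1 \<union> X3) \<inter> (X2 \<union> X3) = X3" using e12 ends by auto
  then have "connected_component (- ((X1 \<union> X3) \<union> (X2 \<union> X3))) u w"
    using Janiszewski[of "X1 \<union> X3" "X2 \<union> X3" u w] cl cc1 cc2
    by (simp add: compact_Un closed_Un connected_path_image arc_imp_path arc3)
  then obtain T where T: "connected T" "T \<subseteq> - (X1 \<union> X2 \<union> X3)" "u \<in> T" "w \<in> T"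
    unfolding connected_component_def by (auto simp: Un_ac)
  have "T \<subseteq> inside (X1 \<union> X2) \<union> outside (X1 \<union> X2)"
    using T(2) inside_Un_outside[of "X1 \<union> X2"] by blast
  then have "T \<subseteq> inside (X1 \<union> X2) \<or> T \<subseteq> outside (X1 \<union> X2)"
    using sep2[OF J12(3) J12(4) inside_Int_outside T(1)] by blast
  then show False using T u w12 inside_Int_outside[of "X1 \<union> X2"] by blast
qed


lemma face_i3:
  assumes ne: "X3 \<inter> inside (X1 \<union> X2) \<noteq> {}"
    and D: "connected D" "D \<inter> (X1 \<union> X2 \<union> X3) = {}"
    and r: "r \<in> closure D" "r \<in> X1" "r \<notin> {a,b}"
    and s: "s \<in> closure D" "s \<in> X2" "s \<notin> {a,b}"
  shows "(D \<subseteq> inside (X1 \<union> X2) \<and> X3 \<inter> inside (X1 \<union> X2) = {}) \<or>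
         (D \<subseteq> outside (X1 \<union> X2) \<and> X3 \<inter> outside (X1 \<union> X2) = {})"
proof -
  obtain d: "inside(X1 \<union> X3) \<inter> inside(X2 \<union> X3) = {}"
    and u: "inside(X1 \<union> X3) \<union> inside(X2 \<union> X3) \<union> (X3 - {a,b}) = inside(X1 \<union> X2)"
    using split_inside_simple_closed_curve[OF arc_imp_simple_path[OF arc1] s1 f1
        arc_imp_simple_path[OF arc2] s2 f2 arc_imp_simple_path[OF arc3] s3 f3 ab e12 e13 e23 ne] .
  have io: "inside (X1 \<union> X2) \<inter> outside (X1 \<union> X2) = {}" by simp
  have "D \<subseteq> inside (X1 \<union> X3) \<union> inside (X2 \<union> X3) \<union> outside (X1 \<union> X2)"
    using D(2) u inside_Un_outside[of "X1 \<union> X2"] by blast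
  then have "D \<subseteq> inside (X1 \<union> X3) \<or> D \<subseteq> inside (X2 \<union> X3) \<or> D \<subseteq> outside (X1 \<union> X2)"
    using sep3[OF J13(3) J23(3) J12(4) d _ _ D(1)] u io by blast
  moreover have "\<not> D \<subseteq> inside (X1 \<union> X3)"
  proof
    assume "D \<subseteq> inside (X1 \<union> X3)"
    then have "s \<in> X1 \<union> X3 \<union> inside (X1 \<union> X3)" using s(1) closure_mono clin(2) by blast
    then show False using s e12 e23 u inside_no_overlap[of "X1 \<union> X2"] by blast
  qed
  moreover have "\<not> D \<subseteq> inside (X2 \<union> X3)"
  proof
    assume "D \<subseteq> inside (X2 \<union> X3)"
    then have "r \<in> X2 \<union> X3 \<union> inside (X2 \<union> X3)" using r(1) closure_mono clin(3) by blast
    then show False using r e12 e13 u inside_no_overlap[of "X1 \<union> X2"] by blast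
  qed
  moreover have "X3 \<inter> outside (X1 \<union> X2) = {}"
    using u io ends outside_no_overlap[of "X1 \<union> X2"] by blast
  ultimately show ?thesis by blast
qed

lemma face_i1:
  assumes ne: "X1 \<inter> inside (X2 \<union> X3) \<noteq> {}"
    and D: "connected D" "D \<inter> (X1 \<union> X2 \<union> X3) = {}"
    and r: "r \<in> closure D" "r \<in> X1" "r \<notin> {a,b}"
    and s: "s \<in> closure D" "s \<in> X2" "s \<notin> {a,b}"
  shows "(D \<subseteq> inside (X1 \<union> X2) \<and> X3 \<inter> inside (X1 \<union> X2) = {}) \<or>
         (D \<subseteq> outside (X1 \<union> X2) \<and> X3 \<inter> outside (X1 \<union> X2) = {})"
proof -
  have e21: "X2 \<inter> X1 = {a,b}" and e31: "X3 \<inter> X1 = {a,b}" using e12 e13 by auto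
  obtain d0: "inside(X2 \<union> X1) \<inter> inside(X3 \<union> X1) = {}"
    and u0: "inside(X2 \<union> X1) \<union> inside(X3 \<union> X1) \<union> (X1 - {a,b}) = inside(X2 \<union> X3)"
    using split_inside_simple_closed_curve[OF arc_imp_simple_path[OF arc2] s2 f2
        arc_imp_simple_path[OF arc3] s3 f3 arc_imp_simple_path[OF arc1] s1 f1 ab e23 e21 e31 ne] .
  have d: "inside(X1 \<union> X2) \<inter> inside(X1 \<union> X3) = {}"
    and u: "inside(X1 \<union> X2) \<union> inside(X1 \<union> X3) \<union> (X1 - {a,b}) = inside(X2 \<union> X3)"
    using d0 u0 by (simp_all add: Un_commute)
  have io: "inside (X2 \<union> X3) \<inter> outside (X2 \<union> X3) = {}" by simp
  have "D \<subseteq> inside (X1 \<union> X2) \<union> inside (X1 \<union> X3) \<union> outside (X2 \<union> X3)"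
    using D(2) u inside_Un_outside[of "X2 \<union> X3"] by blast
  then have "D \<subseteq> inside (X1 \<union> X2) \<or> D \<subseteq> inside (X1 \<union> X3) \<or> D \<subseteq> outside (X2 \<union> X3)"
    using sep3[OF J12(3) J13(3) J23(4) d _ _ D(1)] u io by blast
  moreover have "\<not> D \<subseteq> inside (X1 \<union> X3)"
  proof
    assume "D \<subseteq> inside (X1 \<union> X3)"
    then have "s \<in> X1 \<union> X3 \<union> inside (X1 \<union> X3)" using s(1) closure_mono clin(2) by blast
    then show False using s e12 e23 u inside_no_overlap[of "X2 \<union> X3"] by blast
  qed
  moreover have "\<not> D \<subseteq> outside (X2 \<union> X3)"
  proof
    assume "D \<subseteq> outside (X2 \<union> X3)"
    then have "r \<in> X2 \<union> X3 \<union> outside (X2 \<union> X3)" using r(1) closure_mono clout(3) by blast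
    then show False using r e12 e13 u io by blast
  qed
  moreover have "X3 \<inter> inside (X1 \<union> X2) = {}"
    using u inside_no_overlap[of "X2 \<union> X3"] by blast
  ultimately show ?thesis by blast
qed

lemma face:
  assumes D: "connected D" "D \<inter> (X1 \<union> X2 \<union> X3) = {}"
    and r: "r \<in> closure D" "r \<in> X1" "r \<notin> {a,b}"
    and s: "s \<in> closure D" "s \<in> X2" "s \<notin> {a,b}"
  shows "(D \<subseteq> inside (X1 \<union> X2) \<and> X3 \<inter> inside (X1 \<union> X2) = {}) \<or>
         (D \<subseteq> outside (X1 \<union> X2) \<and> X3 \<inter> outside (X1 \<union> X2) = {})"
proof -
  interpret t: theta c2 c1 c3 a b
    using arc1 arc2 arc3 s1 s2 s3 f1 f2 f3 ab i12 i13 i23 by unfold_locales auto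
  consider "X3 \<inter> inside (X1 \<union> X2) \<noteq> {}" | "X1 \<inter> inside (X2 \<union> X3) \<noteq> {}"
    | "X2 \<inter> inside (X1 \<union> X3) \<noteq> {}" using some_inside by blast
  then show ?thesis
  proof cases
    case 1 then show ?thesis using face_i3 assms by blast
  next
    case 2 then show ?thesis using face_i1 assms by blast
  next
    case 3
    have "D \<inter> (X2 \<union> X1 \<union> X3) = {}" using D(2) by blast
    from t.face_i1[OF 3 D(1) this s r] show ?thesis by (simp add: Un_commute)
  qed
qed

end



lemma K33:
  fixes g00 g01 g02 g10 g11 g12 g20 g21 g22 :: "real \<Rightarrow> complex"
  assumes
    arcs: "arc g00" "pathstart g00 = a0" "pathfinish g00 = b0"
    "arc g01" "pathstart g01 = a0" "pathfinish g01 = b1"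
    "arc g02" "pathstart g02 = a0" "pathfinish g02 = b2"
    "arc g10" "pathstart g10 = a1" "pathfinish g10 = b0"
    "arc g11" "pathstart g11 = a1" "pathfinish g11 = b1"
    "arc g12" "pathstart g12 = a1" "pathfinish g12 = b2"
    "arc g20" "pathstart g20 = a2" "pathfinish g20 = b0"
    "arc g21" "pathstart g21 = a2" "pathfinish g21 = b1"
    "arc g22" "pathstart g22 = a2" "pathfinish g22 = b2"
    and dist: "distinct [a0,a1,a2,b0,b1,b2]"
    and h00_01: "path_image g00 \<inter> path_image g01 \<subseteq> {a0}"
    and h00_02: "path_image g00 \<inter> path_image g02 \<subseteq> {a0}"
    and h00_10: "path_image g00 \<inter> path_image g10 \<subseteq> {b0}"
    and h00_11: "path_image g00 \<inter> path_image g11 \<subseteq> {}"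
    and h00_12: "path_image g00 \<inter> path_image g12 \<subseteq> {}"
    and h00_20: "path_image g00 \<inter> path_image g20 \<subseteq> {b0}"
    and h00_21: "path_image g00 \<inter> path_image g21 \<subseteq> {}"
    and h00_22: "path_image g00 \<inter> path_image g22 \<subseteq> {}"
    and h01_02: "path_image g01 \<inter> path_image g02 \<subseteq> {a0}"
    and h01_10: "path_image g01 \<inter> path_image g10 \<subseteq> {}"
    and h01_11: "path_image g01 \<inter> path_image g11 \<subseteq> {b1}"
    and h01_12: "path_image g01 \<inter> path_image g12 \<subseteq> {}"
    and h01_20: "path_image g01 \<inter> path_image g20 \<subseteq> {}"
    and h01_21: "path_image g01 \<inter> path_image g21 \<subseteq> {b1}"
    and h01_22: "path_image g01 \<inter> path_image g22 \<subseteq> {}"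
    and h02_10: "path_image g02 \<inter> path_image g10 \<subseteq> {}"
    and h02_11: "path_image g02 \<inter> path_image g11 \<subseteq> {}"
    and h02_12: "path_image g02 \<inter> path_image g12 \<subseteq> {b2}"
    and h02_20: "path_image g02 \<inter> path_image g20 \<subseteq> {}"
    and h02_21: "path_image g02 \<inter> path_image g21 \<subseteq> {}"
    and h02_22: "path_image g02 \<inter> path_image g22 \<subseteq> {b2}"
    and h10_11: "path_image g10 \<inter> path_image g11 \<subseteq> {a1}"
    and h10_12: "path_image g10 \<inter> path_image g12 \<subseteq> {a1}"
    and h10_20: "path_image g10 \<inter> path_image g20 \<subseteq> {b0}"
    and h10_21: "path_image g10 \<inter> path_image g21 \<subseteq> {}"
    and h10_22: "path_image g10 \<inter> path_image g22 \<subseteq> {}"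
    and h11_12: "path_image g11 \<inter> path_image g12 \<subseteq> {a1}"
    and h11_20: "path_image g11 \<inter> path_image g20 \<subseteq> {}"
    and h11_21: "path_image g11 \<inter> path_image g21 \<subseteq> {b1}"
    and h11_22: "path_image g11 \<inter> path_image g22 \<subseteq> {}"
    and h12_20: "path_image g12 \<inter> path_image g20 \<subseteq> {}"
    and h12_21: "path_image g12 \<inter> path_image g21 \<subseteq> {}"
    and h12_22: "path_image g12 \<inter> path_image g22 \<subseteq> {b2}"
    and h20_21: "path_image g20 \<inter> path_image g21 \<subseteq> {a2}"
    and h20_22: "path_image g20 \<inter> path_image g22 \<subseteq> {a2}"
    and h21_22: "path_image g21 \<inter> path_image g22 \<subseteq> {a2}"
  shows False
proof -
  note ar = arcs
  have [simp]: "a0 \<noteq> a1" "a0 \<noteq> a2" "a1 \<noteq> a2" "b0 \<noteq> b1" "b0 \<noteq> b2" "b1 \<noteq> b2"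
    "a0 \<noteq> b0" "a0 \<noteq> b1" "a0 \<noteq> b2" "a1 \<noteq> b0" "a1 \<noteq> b1" "a1 \<noteq> b2" "a2 \<noteq> b0" "a2 \<noteq> b1" "a2 \<noteq> b2"
    "a1 \<noteq> a0" "a2 \<noteq> a0" "a2 \<noteq> a1" "b1 \<noteq> b0" "b2 \<noteq> b0" "b2 \<noteq> b1"
    "b0 \<noteq> a0" "b1 \<noteq> a0" "b2 \<noteq> a0" "b0 \<noteq> a1" "b1 \<noteq> a1" "b2 \<noteq> a1" "b0 \<noteq> a2" "b1 \<noteq> a2" "b2 \<noteq> a2"
    using dist by auto
  have pts: "a0 \<in> path_image g00" "b0 \<in> path_image g00" "a0 \<in> path_image g01" "b1 \<in> path_image g01"
    "a0 \<in> path_image g02" "b2 \<in> path_image g02" "a1 \<in> path_image g10" "b0 \<in> path_image g10"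
    "a1 \<in> path_image g11" "b1 \<in> path_image g11" "a1 \<in> path_image g12" "b2 \<in> path_image g12"
    "a2 \<in> path_image g20" "b0 \<in> path_image g20" "a2 \<in> path_image g21" "b1 \<in> path_image g21"
    "a2 \<in> path_image g22" "b2 \<in> path_image g22"
    using arcs by (metis pathstart_in_path_image pathfinish_in_path_image)+
  define c2 where "c2 = g01 +++ (reversepath g11 +++ g10)"
  define c3 where "c3 = g02 +++ (reversepath g22 +++ g20)"
  define e1 where "e1 = g10 +++ (reversepath g20 +++ g22)"
  define e2 where "e2 = g11 +++ (reversepath g01 +++ g02)"
  have arc_c2: "arc c2" unfolding c2_def using arcs h01_11 h01_10 h10_11
    by (intro arc_join arc_reversepath) (auto simp: path_image_join)
  have arc_c3: "arc c3" unfolding c3_def using arcs h02_22 h02_20 h20_22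
    by (intro arc_join arc_reversepath) (auto simp: path_image_join)
  have arc_e1: "arc e1" unfolding e1_def using arcs h10_20 h10_22 h20_22
    by (intro arc_join arc_reversepath) (auto simp: path_image_join)
  have arc_e2: "arc e2" unfolding e2_def using arcs h01_11 h02_11 h01_02
    by (intro arc_join arc_reversepath) (auto simp: path_image_join)
  have pc2: "path_image c2 = path_image g01 \<union> path_image g11 \<union> path_image g10"
    and sc2: "pathstart c2 = a0" and fc2: "pathfinish c2 = b0"
    unfolding c2_def using arcs by (auto simp: path_image_join)
  have pc3: "path_image c3 = path_image g02 \<union> path_image g22 \<union> path_image g20"
    and sc3: "pathstart c3 = a0" and fc3: "pathfinish c3 = b0"
    unfolding c3_def using arcs by (auto simp: path_image_join)
  have pe1: "path_image e1 = path_image g10 \<union> path_image g20 \<union> path_image g22"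
    and se1: "pathstart e1 = a1" and fe1: "pathfinish e1 = b2"
    unfolding e1_def using arcs by (auto simp: path_image_join)
  have pe2: "path_image e2 = path_image g11 \<union> path_image g01 \<union> path_image g02"
    and se2: "pathstart e2 = a1" and fe2: "pathfinish e2 = b2"
    unfolding e2_def using arcs by (auto simp: path_image_join)
  have S_c23: "(path_image g01 \<union> path_image g11 \<union> path_image g10) \<inter> (path_image g02 \<union> path_image g22 \<union> path_image g20) \<subseteq> {a0, b0}"
    unfolding Int_Un_distrib Int_Un_distrib2 Un_subset_iff
    by (intro conjI; use h01_02 h01_22 h01_20 h02_11 h11_22 h11_20 h02_10 h10_22 h10_20 in blast)
  have S_c21: "(path_image g01 \<union> path_image g11 \<union> path_image g10) \<inter> (path_image g00) \<subseteq> {a0, b0}"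
    unfolding Int_Un_distrib Int_Un_distrib2 Un_subset_iff
    by (intro conjI; use h00_01 h00_11 h00_10 in blast)
  have S_c31: "(path_image g02 \<union> path_image g22 \<union> path_image g20) \<inter> (path_image g00) \<subseteq> {a0, b0}"
    unfolding Int_Un_distrib Int_Un_distrib2 Un_subset_iff
    by (intro conjI; use h00_02 h00_22 h00_20 in blast)
  have S_e12: "(path_image g10 \<union> path_image g20 \<union> path_image g22) \<inter> (path_image g11 \<union> path_image g01 \<union> path_image g02) \<subseteq> {a1, b2}"
    unfolding Int_Un_distrib Int_Un_distrib2 Un_subset_iff
    by (intro conjI; use h10_11 h01_10 h02_10 h11_20 h01_20 h02_20 h11_22 h01_22 h02_22 in blast)
  have S_e13: "(path_image g10 \<union> path_image g20 \<union> path_image g22) \<inter> (path_image g12) \<subseteq> {a1, b2}"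
    unfolding Int_Un_distrib Int_Un_distrib2 Un_subset_iff
    by (intro conjI; use h10_12 h12_20 h12_22 in blast)
  have S_e23: "(path_image g11 \<union> path_image g01 \<union> path_image g02) \<inter> (path_image g12) \<subseteq> {a1, b2}"
    unfolding Int_Un_distrib Int_Un_distrib2 Un_subset_iff
    by (intro conjI; use h11_12 h01_12 h02_12 in blast)
  have S_d12: "(path_image g12) \<inter> (path_image g01 \<union> path_image g11 \<union> path_image g10 \<union> path_image g02 \<union> path_image g22 \<union> path_image g20 \<union> path_image g00) \<subseteq> {a1, b2}"
    unfolding Int_Un_distrib Int_Un_distrib2 Un_subset_iff
    by (intro conjI; use h01_12 h11_12 h10_12 h02_12 h12_22 h12_20 h00_12 in blast)
  have S_d21: "(path_image g21) \<inter> (path_image g01 \<union> path_image g11 \<union> path_image g10 \<union> path_image g02 \<union> path_image g22 \<union> path_image g20 \<union> path_image g00) \<subseteq> {a2, b1}"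
    unfolding Int_Un_distrib Int_Un_distrib2 Un_subset_iff
    by (intro conjI; use h01_21 h11_21 h10_21 h02_21 h21_22 h20_21 h00_21 in blast)
  have S_d21b: "(path_image g21) \<inter> (path_image g10 \<union> path_image g20 \<union> path_image g22 \<union> path_image g11 \<union> path_image g01 \<union> path_image g02 \<union> path_image g12) \<subseteq> {a2, b1}"
    unfolding Int_Un_distrib Int_Un_distrib2 Un_subset_iff
    by (intro conjI; use h10_21 h20_21 h21_22 h11_21 h01_21 h02_21 h12_21 in blast)
  have S_z: "(path_image g00) \<inter> (path_image g01 \<union> path_image g11 \<union> path_image g10 \<union> path_image g02 \<union> path_image g22 \<union> path_image g20) \<subseteq> {a0, b0}"
    unfolding Int_Un_distrib Int_Un_distrib2 Un_subset_iff
    by (intro conjI; use h00_01 h00_11 h00_10 h00_02 h00_22 h00_20 in blast)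
  interpret T1: theta c2 c3 g00 a0 b0
  proof
    show "path_image c2 \<inter> path_image c3 \<subseteq> {a0, b0}" unfolding pc2 pc3 by (rule S_c23)
    show "path_image c2 \<inter> path_image g00 \<subseteq> {a0, b0}" unfolding pc2 using S_c21 by simp
    show "path_image c3 \<inter> path_image g00 \<subseteq> {a0, b0}" unfolding pc3 using S_c31 by simp
  qed (use arcs arc_c2 arc_c3 sc2 sc3 fc2 fc3 in auto)
  interpret T2: theta e1 e2 g12 a1 b2
  proof
    show "path_image e1 \<inter> path_image e2 \<subseteq> {a1, b2}" unfolding pe1 pe2 by (rule S_e12)
    show "path_image e1 \<inter> path_image g12 \<subseteq> {a1, b2}" unfolding pe1 using S_e13 by simp
    show "path_image e2 \<inter> path_image g12 \<subseteq> {a1, b2}" unfolding pe2 using S_e23 by simp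
  qed (use arcs arc_e1 arc_e2 se1 se2 fe1 fe2 in auto)
  let ?J = "path_image c2 \<union> path_image c3"
  define D12 where "D12 = path_image g12 - {a1, b2}"
  define D21 where "D21 = path_image g21 - {a2, b1}"
  have cD12: "connected D12" unfolding D12_def
    using connected_simple_path_endless[OF arc_imp_simple_path[of g12]] arcs by auto
  have cD21: "connected D21" unfolding D21_def
    using connected_simple_path_endless[OF arc_imp_simple_path[of g21]] arcs by (auto simp: insert_commute)
  have clD12: "a1 \<in> closure D12" "b2 \<in> closure D12" unfolding D12_def
    using arc_start_closure[of g12] arc_finish_closure[of g12] arcs by auto
  have clD21: "a2 \<in> closure D21" "b1 \<in> closure D21" unfolding D21_def
    using arc_start_closure[of g21] arc_finish_closure[of g21] arcs by (auto simp: insert_commute)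
  have neD12: "D12 \<noteq> {}" unfolding D12_def using arc_mid[of g12] arcs by auto
  have neD21: "D21 \<noteq> {}" unfolding D21_def using arc_mid[of g21] arcs by (auto simp: insert_commute)
  have dD12: "D12 \<inter> (path_image c2 \<union> path_image c3 \<union> path_image g00) = {}"
    unfolding D12_def pc2 pc3 using S_d12 by blast
  have dD21: "D21 \<inter> (path_image c2 \<union> path_image c3 \<union> path_image g00) = {}"
    unfolding D21_def pc2 pc3 using S_d21 by blast
  have dD21': "D21 \<inter> (path_image e1 \<union> path_image e2 \<union> path_image g12) = {}"
    unfolding D21_def pe1 pe2 using S_d21b by blast
  have R1: "(D12 \<subseteq> inside ?J \<and> path_image g00 \<inter> inside ?J = {}) \<or>
         (D12 \<subseteq> outside ?J \<and> path_image g00 \<inter> outside ?J = {})"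
    by (rule T1.face[OF cD12 dD12 clD12(1) _ _ clD12(2)]) (use pts in \<open>auto simp: pc2 pc3\<close>)
  have R2: "(D21 \<subseteq> inside ?J \<and> path_image g00 \<inter> inside ?J = {}) \<or>
         (D21 \<subseteq> outside ?J \<and> path_image g00 \<inter> outside ?J = {})"
    by (rule T1.face[OF cD21 dD21 clD21(2) _ _ clD21(1)]) (use pts in \<open>auto simp: pc2 pc3\<close>)
  have eJ: "path_image e1 \<union> path_image e2 = ?J" unfolding pe1 pe2 pc2 pc3 by blast
  have R3: "(D21 \<subseteq> inside ?J \<and> path_image g12 \<inter> inside ?J = {}) \<or>
         (D21 \<subseteq> outside ?J \<and> path_image g12 \<inter> outside ?J = {})"
    unfolding eJ[symmetric]
    by (rule T2.face[OF cD21 dD21' clD21(1) _ _ clD21(2)]) (use pts in \<open>auto simp: pe1 pe2\<close>)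
  obtain z where z: "z \<in> path_image g00 - {a0, b0}" using arc_mid[of g00] arcs by auto
  have "z \<notin> ?J" using z unfolding pc2 pc3 using S_z by blast
  then have zJ: "z \<in> inside ?J \<or> z \<in> outside ?J" using inside_Un_outside[of ?J] by blast
  have io: "inside ?J \<inter> outside ?J = {}" by simp
  have s12: "D12 \<subseteq> path_image g12" unfolding D12_def by blast
  have z0: "z \<in> path_image g00" using z by blast
  show False
  proof (cases "D21 \<subseteq> inside ?J \<and> path_image g12 \<inter> inside ?J = {}")
    case True
    then have "\<not> D21 \<subseteq> outside ?J" using neD21 io by blast
    then have "path_image g00 \<inter> inside ?J = {}" using R2 by blast
    then have zo: "z \<in> outside ?J" using zJ z0 by blast
    have "\<not> D12 \<subseteq> inside ?J" using True s12 neD12 by blast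
    then have "path_image g00 \<inter> outside ?J = {}" using R1 by blast
    then show False using zo z0 by blast
  next
    case False
    then have F: "D21 \<subseteq> outside ?J" "path_image g12 \<inter> outside ?J = {}" using R3 by blast+
    then have "\<not> D21 \<subseteq> inside ?J" using neD21 io by blast
    then have "path_image g00 \<inter> outside ?J = {}" using R2 by blast
    then have zo: "z \<in> inside ?J" using zJ z0 by blast
    have "\<not> D12 \<subseteq> outside ?J" using F s12 neD12 by blast
    then have "path_image g00 \<inter> inside ?J = {}" using R1 by blast
    then show False using zo z0 by blast
  qed
qed

lemma planar_K33_sub:
  assumes pl: "planar V E"
    and mem: "x0 \<in> V" "x1 \<in> V" "x2 \<in> V" "y0 \<in> V" "y1 \<in> V" "y2 \<in> V" "w \<in> V"
    and dst: "distinct [x0, x1, x2, y0, y1, y2, w]"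
    and ed: "E x0 y0" "E x0 y1" "E x0 y2" "E x1 y0" "E x1 y1" "E x1 y2" "E x2 y0" "E x2 y1"
      "E x2 w" "E w y2"
  shows False
proof -
  obtain f :: "'a \<Rightarrow> complex" and p where inj: "inj_on f V"
    and ar: "\<And>u v. u \<in> V \<Longrightarrow> v \<in> V \<Longrightarrow> E u v \<Longrightarrow>
        arc (p u v) \<and> pathstart (p u v) = f u \<and> pathfinish (p u v) = f v"
    and it: "\<And>u v u' v'. u \<in> V \<Longrightarrow> v \<in> V \<Longrightarrow> u' \<in> V \<Longrightarrow> v' \<in> V \<Longrightarrow> E u v \<Longrightarrow> E u' v' \<Longrightarrow>
        {u, v} \<noteq> {u', v'} \<Longrightarrow> path_image (p u v) \<inter> path_image (p u' v') \<subseteq> f ` ({u, v} \<inter> {u', v'})"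
    using pl unfolding planar_def by metis
  have [simp]: "x0 \<noteq> x1" "x0 \<noteq> x2" "x0 \<noteq> y0" "x0 \<noteq> y1" "x0 \<noteq> y2" "x0 \<noteq> w"
    "x1 \<noteq> x2" "x1 \<noteq> y0" "x1 \<noteq> y1" "x1 \<noteq> y2" "x1 \<noteq> w"
    "x2 \<noteq> y0" "x2 \<noteq> y1" "x2 \<noteq> y2" "x2 \<noteq> w"
    "y0 \<noteq> y1" "y0 \<noteq> y2" "y0 \<noteq> w" "y1 \<noteq> y2" "y1 \<noteq> w" "y2 \<noteq> w"
    using dst by auto
  note neq_sym[simp] = this[THEN not_sym]
  have fd: "distinct [f x0, f x1, f x2, f y0, f y1, f y2]"
    using dst mem inj by (simp add: inj_on_eq_iff)
  have ab: "arc (p x2 w) \<and> pathstart (p x2 w) = f x2 \<and> pathfinish (p x2 w) = f w"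
    using ar mem ed by blast
  have bb: "arc (p w y2) \<and> pathstart (p w y2) = f w \<and> pathfinish (p w y2) = f y2"
    using ar mem ed by blast
  have iwb: "path_image (p x2 w) \<inter> path_image (p w y2) \<subseteq> {f w}"
    using it[of x2 w w y2] mem ed by (auto simp: doubleton_eq_iff)
  have arc22: "arc (p x2 w +++ p w y2)"
    using ab bb iwb by (intro arc_join) auto
  have pi22: "path_image (p x2 w +++ p w y2) = path_image (p x2 w) \<union> path_image (p w y2)"
    using ab bb by (simp add: path_image_join)
  have s22: "pathstart (p x2 w +++ p w y2) = f x2" "pathfinish (p x2 w +++ p w y2) = f y2"
    using ab bb by auto
  have ar00: "arc (p x0 y0)" "pathstart (p x0 y0) = f x0" "pathfinish (p x0 y0) = f y0"
    using ar[of x0 y0] mem ed by auto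
  have ar01: "arc (p x0 y1)" "pathstart (p x0 y1) = f x0" "pathfinish (p x0 y1) = f y1"
    using ar[of x0 y1] mem ed by auto
  have ar02: "arc (p x0 y2)" "pathstart (p x0 y2) = f x0" "pathfinish (p x0 y2) = f y2"
    using ar[of x0 y2] mem ed by auto
  have ar10: "arc (p x1 y0)" "pathstart (p x1 y0) = f x1" "pathfinish (p x1 y0) = f y0"
    using ar[of x1 y0] mem ed by auto
  have ar11: "arc (p x1 y1)" "pathstart (p x1 y1) = f x1" "pathfinish (p x1 y1) = f y1"
    using ar[of x1 y1] mem ed by auto
  have ar12: "arc (p x1 y2)" "pathstart (p x1 y2) = f x1" "pathfinish (p x1 y2) = f y2"
    using ar[of x1 y2] mem ed by auto
  have ar20: "arc (p x2 y0)" "pathstart (p x2 y0) = f x2" "pathfinish (p x2 y0) = f y0"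
    using ar[of x2 y0] mem ed by auto
  have ar21: "arc (p x2 y1)" "pathstart (p x2 y1) = f x2" "pathfinish (p x2 y1) = f y1"
    using ar[of x2 y1] mem ed by auto
  have h00_01: "path_image (p x0 y0) \<inter> path_image (p x0 y1) \<subseteq> {f x0}"
    using it[of x0 y0 x0 y1] mem ed by (auto simp: doubleton_eq_iff)
  have h00_02: "path_image (p x0 y0) \<inter> path_image (p x0 y2) \<subseteq> {f x0}"
    using it[of x0 y0 x0 y2] mem ed by (auto simp: doubleton_eq_iff)
  have h00_10: "path_image (p x0 y0) \<inter> path_image (p x1 y0) \<subseteq> {f y0}"
    using it[of x0 y0 x1 y0] mem ed by (auto simp: doubleton_eq_iff)
  have h00_11: "path_image (p x0 y0) \<inter> path_image (p x1 y1) \<subseteq> {}"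
    using it[of x0 y0 x1 y1] mem ed by (auto simp: doubleton_eq_iff)
  have h00_12: "path_image (p x0 y0) \<inter> path_image (p x1 y2) \<subseteq> {}"
    using it[of x0 y0 x1 y2] mem ed by (auto simp: doubleton_eq_iff)
  have h00_20: "path_image (p x0 y0) \<inter> path_image (p x2 y0) \<subseteq> {f y0}"
    using it[of x0 y0 x2 y0] mem ed by (auto simp: doubleton_eq_iff)
  have h00_21: "path_image (p x0 y0) \<inter> path_image (p x2 y1) \<subseteq> {}"
    using it[of x0 y0 x2 y1] mem ed by (auto simp: doubleton_eq_iff)
  have h00_22: "path_image (p x0 y0) \<inter> path_image (p x2 w +++ p w y2) \<subseteq> {}"
    unfolding pi22 using it[of x0 y0 x2 w] it[of x0 y0 w y2] mem ed by (auto simp: doubleton_eq_iff)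
  have h01_02: "path_image (p x0 y1) \<inter> path_image (p x0 y2) \<subseteq> {f x0}"
    using it[of x0 y1 x0 y2] mem ed by (auto simp: doubleton_eq_iff)
  have h01_10: "path_image (p x0 y1) \<inter> path_image (p x1 y0) \<subseteq> {}"
    using it[of x0 y1 x1 y0] mem ed by (auto simp: doubleton_eq_iff)
  have h01_11: "path_image (p x0 y1) \<inter> path_image (p x1 y1) \<subseteq> {f y1}"
    using it[of x0 y1 x1 y1] mem ed by (auto simp: doubleton_eq_iff)
  have h01_12: "path_image (p x0 y1) \<inter> path_image (p x1 y2) \<subseteq> {}"
    using it[of x0 y1 x1 y2] mem ed by (auto simp: doubleton_eq_iff)
  have h01_20: "path_image (p x0 y1) \<inter> path_image (p x2 y0) \<subseteq> {}"
    using it[of x0 y1 x2 y0] mem ed by (auto simp: doubleton_eq_iff)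
  have h01_21: "path_image (p x0 y1) \<inter> path_image (p x2 y1) \<subseteq> {f y1}"
    using it[of x0 y1 x2 y1] mem ed by (auto simp: doubleton_eq_iff)
  have h01_22: "path_image (p x0 y1) \<inter> path_image (p x2 w +++ p w y2) \<subseteq> {}"
    unfolding pi22 using it[of x0 y1 x2 w] it[of x0 y1 w y2] mem ed by (auto simp: doubleton_eq_iff)
  have h02_10: "path_image (p x0 y2) \<inter> path_image (p x1 y0) \<subseteq> {}"
    using it[of x0 y2 x1 y0] mem ed by (auto simp: doubleton_eq_iff)
  have h02_11: "path_image (p x0 y2) \<inter> path_image (p x1 y1) \<subseteq> {}"
    using it[of x0 y2 x1 y1] mem ed by (auto simp: doubleton_eq_iff)
  have h02_12: "path_image (p x0 y2) \<inter> path_image (p x1 y2) \<subseteq> {f y2}"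
    using it[of x0 y2 x1 y2] mem ed by (auto simp: doubleton_eq_iff)
  have h02_20: "path_image (p x0 y2) \<inter> path_image (p x2 y0) \<subseteq> {}"
    using it[of x0 y2 x2 y0] mem ed by (auto simp: doubleton_eq_iff)
  have h02_21: "path_image (p x0 y2) \<inter> path_image (p x2 y1) \<subseteq> {}"
    using it[of x0 y2 x2 y1] mem ed by (auto simp: doubleton_eq_iff)
  have h02_22: "path_image (p x0 y2) \<inter> path_image (p x2 w +++ p w y2) \<subseteq> {f y2}"
    unfolding pi22 using it[of x0 y2 x2 w] it[of x0 y2 w y2] mem ed by (auto simp: doubleton_eq_iff)
  have h10_11: "path_image (p x1 y0) \<inter> path_image (p x1 y1) \<subseteq> {f x1}"
    using it[of x1 y0 x1 y1] mem ed by (auto simp: doubleton_eq_iff)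
  have h10_12: "path_image (p x1 y0) \<inter> path_image (p x1 y2) \<subseteq> {f x1}"
    using it[of x1 y0 x1 y2] mem ed by (auto simp: doubleton_eq_iff)
  have h10_20: "path_image (p x1 y0) \<inter> path_image (p x2 y0) \<subseteq> {f y0}"
    using it[of x1 y0 x2 y0] mem ed by (auto simp: doubleton_eq_iff)
  have h10_21: "path_image (p x1 y0) \<inter> path_image (p x2 y1) \<subseteq> {}"
    using it[of x1 y0 x2 y1] mem ed by (auto simp: doubleton_eq_iff)
  have h10_22: "path_image (p x1 y0) \<inter> path_image (p x2 w +++ p w y2) \<subseteq> {}"
    unfolding pi22 using it[of x1 y0 x2 w] it[of x1 y0 w y2] mem ed by (auto simp: doubleton_eq_iff)
  have h11_12: "path_image (p x1 y1) \<inter> path_image (p x1 y2) \<subseteq> {f x1}"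
    using it[of x1 y1 x1 y2] mem ed by (auto simp: doubleton_eq_iff)
  have h11_20: "path_image (p x1 y1) \<inter> path_image (p x2 y0) \<subseteq> {}"
    using it[of x1 y1 x2 y0] mem ed by (auto simp: doubleton_eq_iff)
  have h11_21: "path_image (p x1 y1) \<inter> path_image (p x2 y1) \<subseteq> {f y1}"
    using it[of x1 y1 x2 y1] mem ed by (auto simp: doubleton_eq_iff)
  have h11_22: "path_image (p x1 y1) \<inter> path_image (p x2 w +++ p w y2) \<subseteq> {}"
    unfolding pi22 using it[of x1 y1 x2 w] it[of x1 y1 w y2] mem ed by (auto simp: doubleton_eq_iff)
  have h12_20: "path_image (p x1 y2) \<inter> path_image (p x2 y0) \<subseteq> {}"
    using it[of x1 y2 x2 y0] mem ed by (auto simp: doubleton_eq_iff)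
  have h12_21: "path_image (p x1 y2) \<inter> path_image (p x2 y1) \<subseteq> {}"
    using it[of x1 y2 x2 y1] mem ed by (auto simp: doubleton_eq_iff)
  have h12_22: "path_image (p x1 y2) \<inter> path_image (p x2 w +++ p w y2) \<subseteq> {f y2}"
    unfolding pi22 using it[of x1 y2 x2 w] it[of x1 y2 w y2] mem ed by (auto simp: doubleton_eq_iff)
  have h20_21: "path_image (p x2 y0) \<inter> path_image (p x2 y1) \<subseteq> {f x2}"
    using it[of x2 y0 x2 y1] mem ed by (auto simp: doubleton_eq_iff)
  have h20_22: "path_image (p x2 y0) \<inter> path_image (p x2 w +++ p w y2) \<subseteq> {f x2}"
    unfolding pi22 using it[of x2 y0 x2 w] it[of x2 y0 w y2] mem ed by (auto simp: doubleton_eq_iff)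
  have h21_22: "path_image (p x2 y1) \<inter> path_image (p x2 w +++ p w y2) \<subseteq> {f x2}"
    unfolding pi22 using it[of x2 y1 x2 w] it[of x2 y1 w y2] mem ed by (auto simp: doubleton_eq_iff)
  show False by (rule K33[OF ar00 ar01 ar02 ar10 ar11 ar12 ar20 ar21 arc22 s22(1) s22(2) fd h00_01 h00_02 h00_10 h00_11 h00_12 h00_20 h00_21 h00_22 h01_02 h01_10 h01_11 h01_12 h01_20 h01_21 h01_22 h02_10 h02_11 h02_12 h02_20 h02_21 h02_22 h10_11 h10_12 h10_20 h10_21 h10_22 h11_12 h11_20 h11_21 h11_22 h12_20 h12_21 h12_22 h20_21 h20_22 h21_22])
qed



lemma mult_Pair: "(a, b) * (c, d) = (a * c, b * d)"
  by (simp add: times_prod_def)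

lemma span_prod: "span_plus (x, y) (A \<times> B) = span_plus x A \<times> span_plus y B"
proof
  show "span_plus (x, y) (A \<times> B) \<subseteq> span_plus x A \<times> span_plus y B"
    by (auto simp: span_plus_def mult_Pair)
  show "span_plus x A \<times> span_plus y B \<subseteq> span_plus (x, y) (A \<times> B)"
  proof
    fix z assume "z \<in> span_plus x A \<times> span_plus y B"
    then obtain r1 i1 r2 i2 where "i1 \<in> A" "i2 \<in> B" "z = (x * r1 + i1, y * r2 + i2)"
      by (auto simp: span_plus_def)
    then show "z \<in> span_plus (x, y) (A \<times> B)" unfolding span_plus_def
      by (intro CollectI exI[of _ "(r1, r2)"] exI[of _ "(i1, i2)"]) (auto simp: mult_Pair)
  qed
qed

lemma Times_UNIV_iff: "A \<times> B = UNIV \<longleftrightarrow> A = UNIV \<and> B = UNIV"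
proof
  assume h: "A \<times> B = UNIV"
  have "\<And>x y. (x, y) \<in> A \<times> B" using h by simp
  then show "A = UNIV \<and> B = UNIV" by blast
qed simp

lemma span_zero: "is_ideal I \<Longrightarrow> span_plus 0 I = I"
  by (auto simp: span_plus_def)

lemma span_unit:
  assumes "is_ideal I" "u * v = 1" shows "span_plus u I = UNIV"
proof -
  have "x \<in> span_plus u I" for x
  proof -
    have "x = u * (v * x) + 0" by (simp add: mult.assoc[symmetric] assms(2))
    moreover have "(0::'a) \<in> I" using assms(1) by (simp add: is_ideal_def)
    ultimately show ?thesis unfolding span_plus_def by blast
  qed
  then show ?thesis by blast
qed

lemma unit_notin:
  assumes "proper_ideal I" "u * v = 1" shows "u \<notin> I"
proof
  assume "u \<in> I"
  then have "v * u \<in> I" using assms(1) by (simp add: proper_ideal_def is_ideal_def)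
  then have 1: "1 \<in> I" using assms(2) by (simp add: mult.commute)
  have "r \<in> I" for r using 1 assms(1) unfolding proper_ideal_def is_ideal_def
    by (metis mult_1_right)
  then show False using assms(1) by (auto simp: proper_ideal_def)
qed

lemma one_neq_zero_ring:
  assumes "proper_ideal (I::'a::comm_ring_1 set)" shows "(1::'a) \<noteq> 0"
proof
  assume "(1::'a) = 0"
  then have z: "\<And>x::'a. x = 0" by (metis mult_1 mult_zero_left)
  have "0 \<in> I" "I \<noteq> UNIV" using assms by (auto simp: proper_ideal_def is_ideal_def)
  then show False using z by (metis UNIV_eq_I)
qed

lemma local_unit:
  assumes fin: "finite (UNIV :: 'a::comm_ring_1 set)" and loc: "local_ring TYPE('a)"
    and c: "CARD('a) \<ge> 3"
  shows "\<exists>u v::'a. u * v = 1 \<and> u \<noteq> 1"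
proof -
  obtain M :: "'a set" where M: "maximal_ideal M" and Mu: "\<And>N. maximal_ideal N \<Longrightarrow> N = M"
    using loc unfolding local_ring_def by blast
  have Mi: "is_ideal M" "M \<noteq> UNIV" using M by (auto simp: maximal_ideal_def proper_ideal_def)
  have nonunit: "x \<in> M" if nu: "\<forall>v. x * v \<noteq> 1" for x
  proof -
    define J0 where "J0 = {x * r | r. True}"
    have J0i: "is_ideal J0" unfolding is_ideal_def
    proof (intro conjI ballI allI)
      show "0 \<in> J0" unfolding J0_def by (intro CollectI exI[of _ 0]) simp
      fix p q assume "p \<in> J0" "q \<in> J0"
      then obtain r1 r2 where "p = x * r1" "q = x * r2" unfolding J0_def by blast
      then have "p + q = x * (r1 + r2)" by (simp add: distrib_left)
      then show "p + q \<in> J0" unfolding J0_def by blast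
    next
      fix p r assume "p \<in> J0"
      then obtain r1 where "p = x * r1" unfolding J0_def by blast
      then have "r * p = x * (r * r1)" by (simp add: mult.left_commute)
      then show "r * p \<in> J0" unfolding J0_def by blast
    qed
    have J0p: "1 \<notin> J0" using nu unfolding J0_def by auto
    let ?F = "{J. proper_ideal J \<and> J0 \<subseteq> J}"
    have "?F \<subseteq> Pow UNIV" by blast
    moreover have "finite (Pow (UNIV::'a set))" using finite_Pow_iff fin by blast
    ultimately have finF: "finite ?F" by (rule finite_subset)
    have "J0 \<noteq> UNIV" using J0p by blast
    then have J0F: "J0 \<in> ?F" using J0i by (simp add: proper_ideal_def)
    then have neF: "?F \<noteq> {}" by blast
    from finite_has_maximal[OF finF neF] obtain m where m: "m \<in> ?F"
      and mm0: "\<forall>b\<in>?F. m \<le> b \<longrightarrow> m = b" by blast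
    have mm: "\<And>b. b \<in> ?F \<Longrightarrow> m \<subseteq> b \<Longrightarrow> m = b" using mm0 by blast
    have "maximal_ideal m" unfolding maximal_ideal_def
    proof (intro conjI allI impI)
      show "proper_ideal m" using m by auto
      fix J assume J: "is_ideal J \<and> m \<subseteq> J"
      show "J = m \<or> J = UNIV"
      proof (cases "J = UNIV")
        case False
        then have "J \<in> ?F" using J m by (auto simp: proper_ideal_def)
        then show ?thesis using mm J by blast
      qed simp
    qed
    then have "m = M" using Mu by blast
    moreover have "x \<in> J0" unfolding J0_def by (auto intro: exI[of _ 1])
    moreover have "J0 \<subseteq> m" using m by blast
    ultimately show ?thesis by blast
  qed
  show ?thesis
  proof (cases "\<exists>a\<in>M. a \<noteq> 0")
    case True
    then obtain a where a: "a \<in> M" "a \<noteq> 0" by blast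
    have "\<exists>v. (1 + a) * v = 1"
    proof (rule ccontr)
      assume "\<not> ?thesis"
      then have "1 + a \<in> M" using nonunit by blast
      moreover have "(-1) * a \<in> M" using a Mi(1) unfolding is_ideal_def by blast
      ultimately have "(1 + a) + (-1) * a \<in> M" using Mi(1) unfolding is_ideal_def by blast
      then have "1 \<in> M" by simp
      then have "\<forall>r. r * 1 \<in> M" using Mi(1) unfolding is_ideal_def by blast
      then show False using Mi(2) by auto
    qed
    then show ?thesis using a by force
  next
    case False
    then have M0: "M \<subseteq> {0}" by auto
    have "\<not> UNIV \<subseteq> {0, 1::'a}"
    proof
      assume "UNIV \<subseteq> {0, 1::'a}"
      then have "CARD('a) \<le> card {0, 1::'a}" by (intro card_mono) auto
      also have "\<dots> \<le> 2" by (simp add: card_insert_if)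
      finally show False using c by simp
    qed
    then obtain u :: 'a where u: "u \<noteq> 0" "u \<noteq> 1" by blast
    then have "\<exists>v. u * v = 1" using nonunit M0 by blast
    then show ?thesis using u by blast
  qed
qed



lemma comp_facts:
  fixes I :: "'a::comm_ring_1 set"
  assumes "proper_ideal I" "u * v = 1"
  shows "span_plus 0 I = I" "span_plus 1 I = UNIV" "span_plus u I = UNIV" "(0::'a) \<in> I"
    "(1::'a) \<notin> I" "u \<notin> I" "I \<noteq> UNIV" "(1::'a) \<noteq> 0" "u \<noteq> 0"
proof -
  have id: "is_ideal I" using assms(1) by (simp add: proper_ideal_def)
  show "span_plus 0 I = I" using span_zero[OF id] .
  show "span_plus 1 I = UNIV" using span_unit[OF id, of 1 1] by simp
  show "span_plus u I = UNIV" using span_unit[OF id assms(2)] .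
  show "(0::'a) \<in> I" using id by (simp add: is_ideal_def)
  show "(1::'a) \<notin> I" using unit_notin[OF assms(1), of 1 1] by simp
  show "u \<notin> I" using unit_notin[OF assms] .
  show "I \<noteq> UNIV" using assms(1) by (simp add: proper_ideal_def)
  show "(1::'a) \<noteq> 0" using one_neq_zero_ring[OF assms(1)] .
  show "u \<noteq> 0" using assms(2) one_neq_zero_ring[OF assms(1)] by auto
qed

lemma span3: "span_plus (x1, x2, x3) (I1 \<times> I2 \<times> I3) = span_plus x1 I1 \<times> span_plus x2 I2 \<times> span_plus x3 I3"
  by (simp add: span_prod)

theorem proposition3p6:
  fixes I1 :: "'a::comm_ring_1 set" and I2 :: "'b::comm_ring_1 set" and I3 :: "'c::comm_ring_1 set"
  assumes "finite (UNIV :: 'a set)" and "finite (UNIV :: 'b set)" and "finite (UNIV :: 'c set)"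
    and "local_ring TYPE('a)" and "local_ring TYPE('b)" and "local_ring TYPE('c)"
    and "proper_ideal I1" and "proper_ideal I2" and "proper_ideal I3"
    and "CARD('a) \<ge> 3 \<or> CARD('b) \<ge> 3 \<or> CARD('c) \<ge> 3"
  shows "\<not> planar (gamma2_verts (I1 \<times> I2 \<times> I3)) (gamma2_adj (I1 \<times> I2 \<times> I3))"
proof
  assume pl: "planar (gamma2_verts (I1 \<times> I2 \<times> I3)) (gamma2_adj (I1 \<times> I2 \<times> I3))"
  let ?I = "I1 \<times> I2 \<times> I3"
  note F1 = comp_facts[OF assms(7), of 1 1, simplified]
  note F2 = comp_facts[OF assms(8), of 1 1, simplified]
  note F3 = comp_facts[OF assms(9), of 1 1, simplified]
  have memV: "\<And>x y. gamma2_adj ?I x y \<Longrightarrow> x \<in> gamma2_verts ?I"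
    by (simp add: gamma2_adj_def)
  have memV2: "\<And>x y. gamma2_adj ?I x y \<Longrightarrow> y \<in> gamma2_verts ?I"
    by (simp add: gamma2_adj_def)
  consider "CARD('a) \<ge> 3" | "CARD('b) \<ge> 3" | "CARD('c) \<ge> 3" using assms(10) by blast
  then show False
  proof cases
    case 1
    obtain u v :: 'a where uv: "u * v = 1" "u \<noteq> 1" using local_unit[OF assms(1) assms(4) 1] by blast
    note U = comp_facts[OF assms(7) uv(1)]
    note S = F1 F2 F3 U span3 Times_UNIV_iff gamma2_adj_def gamma2_verts_def uv(2) not_sym[OF uv(2)]
      not_sym[OF U(9)]
    have ed: "gamma2_adj ?I (1::'a, 1::'b, 0::'c) (1::'a, 0::'b, 1::'c)" "gamma2_adj ?I (1::'a, 1::'b, 0::'c) (u::'a, 0::'b, 1::'c)" "gamma2_adj ?I (1::'a, 1::'b, 0::'c) (0::'a, 1::'b, 1::'c)"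
      "gamma2_adj ?I (u::'a, 1::'b, 0::'c) (1::'a, 0::'b, 1::'c)" "gamma2_adj ?I (u::'a, 1::'b, 0::'c) (u::'a, 0::'b, 1::'c)" "gamma2_adj ?I (u::'a, 1::'b, 0::'c) (0::'a, 1::'b, 1::'c)"
      "gamma2_adj ?I (0::'a, 1::'b, 0::'c) (1::'a, 0::'b, 1::'c)" "gamma2_adj ?I (0::'a, 1::'b, 0::'c) (u::'a, 0::'b, 1::'c)" "gamma2_adj ?I (0::'a, 1::'b, 0::'c) (1::'a, 0::'b, 0::'c)" "gamma2_adj ?I (1::'a, 0::'b, 0::'c) (0::'a, 1::'b, 1::'c)"
      by (simp_all add: S)
    have dst: "distinct [(1::'a, 1::'b, 0::'c), (u::'a, 1::'b, 0::'c), (0::'a, 1::'b, 0::'c), (1::'a, 0::'b, 1::'c), (u::'a, 0::'b, 1::'c), (0::'a, 1::'b, 1::'c), (1::'a, 0::'b, 0::'c)]" by (simp add: S)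
    show False
      by (rule planar_K33_sub[OF pl memV[OF ed(1)] memV[OF ed(4)] memV[OF ed(7)]
          memV2[OF ed(1)] memV2[OF ed(2)] memV2[OF ed(3)] memV2[OF ed(9)] dst ed])
  next
    case 2
    obtain u v :: 'b where uv: "u * v = 1" "u \<noteq> 1" using local_unit[OF assms(2) assms(5) 2] by blast
    note U = comp_facts[OF assms(8) uv(1)]
    note S = F1 F2 F3 U span3 Times_UNIV_iff gamma2_adj_def gamma2_verts_def uv(2) not_sym[OF uv(2)]
      not_sym[OF U(9)]
    have ed: "gamma2_adj ?I (1::'a, 1::'b, 0::'c) (0::'a, 1::'b, 1::'c)" "gamma2_adj ?I (1::'a, 1::'b, 0::'c) (0::'a, u::'b, 1::'c)" "gamma2_adj ?I (1::'a, 1::'b, 0::'c) (1::'a, 0::'b, 1::'c)"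
      "gamma2_adj ?I (1::'a, u::'b, 0::'c) (0::'a, 1::'b, 1::'c)" "gamma2_adj ?I (1::'a, u::'b, 0::'c) (0::'a, u::'b, 1::'c)" "gamma2_adj ?I (1::'a, u::'b, 0::'c) (1::'a, 0::'b, 1::'c)"
      "gamma2_adj ?I (1::'a, 0::'b, 0::'c) (0::'a, 1::'b, 1::'c)" "gamma2_adj ?I (1::'a, 0::'b, 0::'c) (0::'a, u::'b, 1::'c)" "gamma2_adj ?I (1::'a, 0::'b, 0::'c) (0::'a, 1::'b, 0::'c)" "gamma2_adj ?I (0::'a, 1::'b, 0::'c) (1::'a, 0::'b, 1::'c)"
      by (simp_all add: S)
    have dst: "distinct [(1::'a, 1::'b, 0::'c), (1::'a, u::'b, 0::'c), (1::'a, 0::'b, 0::'c), (0::'a, 1::'b, 1::'c), (0::'a, u::'b, 1::'c), (1::'a, 0::'b, 1::'c), (0::'a, 1::'b, 0::'c)]" by (simp add: S)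
    show False
      by (rule planar_K33_sub[OF pl memV[OF ed(1)] memV[OF ed(4)] memV[OF ed(7)]
          memV2[OF ed(1)] memV2[OF ed(2)] memV2[OF ed(3)] memV2[OF ed(9)] dst ed])
  next
    case 3
    obtain u v :: 'c where uv: "u * v = 1" "u \<noteq> 1" using local_unit[OF assms(3) assms(6) 3] by blast
    note U = comp_facts[OF assms(9) uv(1)]
    note S = F1 F2 F3 U span3 Times_UNIV_iff gamma2_adj_def gamma2_verts_def uv(2) not_sym[OF uv(2)]
      not_sym[OF U(9)]
    have ed: "gamma2_adj ?I (1::'a, 0::'b, 1::'c) (0::'a, 1::'b, 1::'c)" "gamma2_adj ?I (1::'a, 0::'b, 1::'c) (0::'a, 1::'b, u::'c)" "gamma2_adj ?I (1::'a, 0::'b, 1::'c) (1::'a, 1::'b, 0::'c)"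
      "gamma2_adj ?I (1::'a, 0::'b, u::'c) (0::'a, 1::'b, 1::'c)" "gamma2_adj ?I (1::'a, 0::'b, u::'c) (0::'a, 1::'b, u::'c)" "gamma2_adj ?I (1::'a, 0::'b, u::'c) (1::'a, 1::'b, 0::'c)"
      "gamma2_adj ?I (1::'a, 0::'b, 0::'c) (0::'a, 1::'b, 1::'c)" "gamma2_adj ?I (1::'a, 0::'b, 0::'c) (0::'a, 1::'b, u::'c)" "gamma2_adj ?I (1::'a, 0::'b, 0::'c) (0::'a, 0::'b, 1::'c)" "gamma2_adj ?I (0::'a, 0::'b, 1::'c) (1::'a, 1::'b, 0::'c)"
      by (simp_all add: S)
    have dst: "distinct [(1::'a, 0::'b, 1::'c), (1::'a, 0::'b, u::'c), (1::'a, 0::'b, 0::'c), (0::'a, 1::'b, 1::'c), (0::'a, 1::'b, u::'c), (1::'a, 1::'b, 0::'c), (0::'a, 0::'b, 1::'c)]" by (simp add: S)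
    show False
      by (rule planar_K33_sub[OF pl memV[OF ed(1)] memV[OF ed(4)] memV[OF ed(7)]
          memV2[OF ed(1)] memV2[OF ed(2)] memV2[OF ed(3)] memV2[OF ed(9)] dst ed])
  qed
qed

end
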